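(* Let $G$ be an abelian group, $\phi\in\mathcal{P}^{\mathbb{H}}_*(G)$, and let $\mu$ be a nonnegative Radon measure on $G^\delta$ with $\phi(g)=\int_{G^\delta}\gamma(g)\,d\mu(\gamma)$ for all $g\in G$. Then $\mu$ is the unique nonnegative Radon measure with this property if and only if every nonzero $\nu\in\mathcal{K}(G^\delta)$ satisfies one of the following: (i) $\nu^-_2\neq0$; (ii) $\nu^-_2=0$ and the Radon–Nikodym derivative $d\nu^-_1/d\mu$ is not $\mu$-essentially bounded, where $\nu^-$ is the negative (lower) variation of $\nu$ and $\nu^-=\nu^-_1+\nu^-_2$ is its Lebesgue decomposition into a part $\nu^-_1$ absolutely continuous and a part $\nu^-_2$ singular with respect to $\mu$.
   Context: $\mathbb{H}$ is the real quaternion algebra, $\mathbb{S}=\{q\in\mathbb{H}:|q|=1\}$. For an abelian group $G$, $\phi:G\to\mathbb{H}$ is positive definite if for all $k$, $g_i\in G$, $q_i\in\mathbb{H}$, $\sum_{i,j=1}^k\overline{q_i}\,\phi(g_j-g_i)\,q_j$ is a nonnegative real number; $\mathcal{P}^{\mathbb{H}}_*(G)$ is the set of such $\phi$ with $\phi(0)=1$. $G^\delta=\mathrm{Hom}(G,\mathbb{S})$ with the topology of pointwise convergence (a compact Hausdorff space). $\mathcal{M}(G^\delta)$ is the space of finite signed real Radon measures on $G^\delta$, and $\mathcal{K}(G^\delta)=\{\nu\in\mathcal{M}(G^\delta):\int_{G^\delta}\gamma(g)\,d\nu(\gamma)=0\text{ for all }g\in G\}$. *)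

theory Defs
  imports "HOL-Analysis.Analysis"
begin

text \<open>A quaternion a + b i + c j + d k is represented by the 4-tuple (a,b,c,d) of reals.
  Addition, the (Euclidean) norm and the topology are the ones of the product type;
  the Hamilton product and the conjugation are defined explicitly.\<close>

type_synonym quat = "real \<times> real \<times> real \<times> real"

fun qmult :: "quat \<Rightarrow> quat \<Rightarrow> quat" where
  "qmult (a1, b1, c1, d1) (a2, b2, c2, d2) =
     (a1*a2 - b1*b2 - c1*c2 - d1*d2,
      a1*b2 + b1*a2 + c1*d2 - d1*c2,
      a1*c2 - b1*d2 + c1*a2 + d1*b2,
      a1*d2 + b1*c2 - c1*b2 + d1*a2)"

fun qconj :: "quat \<Rightarrow> quat" where
  "qconj (a, b, c, d) = (a, -b, -c, -d)"

definition qreal :: "real \<Rightarrow> quat" where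
  "qreal r = (r, 0, 0, 0)"

definition qsphere :: "quat set" where
  "qsphere = {q. norm q = 1}"

definition qpos_def :: "('g::ab_group_add \<Rightarrow> quat) \<Rightarrow> bool" where
  "qpos_def \<phi> \<longleftrightarrow>
     (\<forall>(k::nat) (g::nat \<Rightarrow> 'g) (q::nat \<Rightarrow> quat).
        \<exists>r::real. r \<ge> 0 \<and>
          (\<Sum>i<k. \<Sum>j<k. qmult (qmult (qconj (q i)) (\<phi> (g j - g i))) (q j)) = qreal r)"

definition P_star_H :: "('g::ab_group_add \<Rightarrow> quat) set" where
  "P_star_H = {\<phi>. qpos_def \<phi> \<and> \<phi> 0 = qreal 1}"

definition Gdelta :: "('g::ab_group_add \<Rightarrow> quat) set" where
  "Gdelta = {\<gamma>. (\<forall>g. \<gamma> g \<in> qsphere) \<and> (\<forall>g h. \<gamma> (g + h) = qmult (\<gamma> g) (\<gamma> h))}"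

definition Gdelta_top :: "('g::ab_group_add \<Rightarrow> quat) topology" where
  "Gdelta_top = subtopology (product_topology (\<lambda>_. euclidean) UNIV) Gdelta"

definition borel_of :: "'a topology \<Rightarrow> 'a measure" where
  "borel_of X = sigma (topspace X) {U. openin X U}"

definition radon :: "'a topology \<Rightarrow> 'a measure \<Rightarrow> bool" where
  "radon X M \<longleftrightarrow> sets M = sets (borel_of X) \<and> finite_measure M \<and>
     (\<forall>A\<in>sets M. emeasure M A = (INF U\<in>{U. openin X U \<and> A \<subseteq> U}. emeasure M U)) \<and>
     (\<forall>A\<in>sets M. emeasure M A = (SUP K\<in>{K. compactin X K \<and> K \<subseteq> A}. emeasure M K))"

definition signed_measure :: "'a measure \<Rightarrow> ('a set \<Rightarrow> real) \<Rightarrow> bool" where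
  "signed_measure M \<nu> \<longleftrightarrow> \<nu> {} = 0 \<and>
     (\<forall>A::nat \<Rightarrow> 'a set. range A \<subseteq> sets M \<longrightarrow> disjoint_family A \<longrightarrow>
        (\<lambda>n. \<nu> (A n)) sums \<nu> (\<Union>n. A n))"

definition upper_variation :: "'a measure \<Rightarrow> ('a set \<Rightarrow> real) \<Rightarrow> 'a measure" where
  "upper_variation M \<nu> = measure_of (space M) (sets M)
     (\<lambda>A. SUP B\<in>{B\<in>sets M. B \<subseteq> A}. ennreal (\<nu> B))"

definition lower_variation :: "'a measure \<Rightarrow> ('a set \<Rightarrow> real) \<Rightarrow> 'a measure" where
  "lower_variation M \<nu> = measure_of (space M) (sets M)
     (\<lambda>A. SUP B\<in>{B\<in>sets M. B \<subseteq> A}. ennreal (- \<nu> B))"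

definition signed_radon :: "'a topology \<Rightarrow> ('a set \<Rightarrow> real) \<Rightarrow> bool" where
  "signed_radon X \<nu> \<longleftrightarrow> signed_measure (borel_of X) \<nu> \<and>
     radon X (upper_variation (borel_of X) \<nu>) \<and> radon X (lower_variation (borel_of X) \<nu>)"

definition K_Gdelta :: "(('g::ab_group_add \<Rightarrow> quat) set \<Rightarrow> real) set" where
  "K_Gdelta = {\<nu>. signed_radon Gdelta_top \<nu> \<and>
     (\<forall>g. (\<integral>\<gamma>. \<gamma> g \<partial>(upper_variation (borel_of Gdelta_top) \<nu>))
          - (\<integral>\<gamma>. \<gamma> g \<partial>(lower_variation (borel_of Gdelta_top) \<nu>)) = 0)}"

definition mutually_singular :: "'a measure \<Rightarrow> 'a measure \<Rightarrow> bool" where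
  "mutually_singular M N \<longleftrightarrow>
     (\<exists>S\<in>sets M. emeasure M S = 0 \<and> emeasure N (space M - S) = 0)"

definition lebesgue_decomposition ::
  "'a measure \<Rightarrow> 'a measure \<Rightarrow> 'a measure \<Rightarrow> 'a measure \<Rightarrow> bool" where
  "lebesgue_decomposition M L L1 L2 \<longleftrightarrow>
     sets L1 = sets L \<and> sets L2 = sets L \<and>
     (\<forall>A\<in>sets L. emeasure L A = emeasure L1 A + emeasure L2 A) \<and>
     absolutely_continuous M L1 \<and> mutually_singular M L2"

definition ess_bounded :: "'a measure \<Rightarrow> ('a \<Rightarrow> ennreal) \<Rightarrow> bool" where
  "ess_bounded M f \<longleftrightarrow> (\<exists>C::real. AE x in M. f x \<le> ennreal C)"

end

theory Submission
  imports Defs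
begin


definition msum :: "'a measure \<Rightarrow> 'a measure \<Rightarrow> 'a measure" where
  "msum M N = measure_of (space M) (sets M) (\<lambda>A. emeasure M A + emeasure N A)"

lemma sets_msum[simp, measurable_cong]: "sets (msum M N) = sets M"
  by (simp add: msum_def)

lemma space_msum[simp]: "space (msum M N) = space M"
  by (simp add: msum_def)

lemma emeasure_msum:
  assumes "sets N = sets M"
  shows "emeasure (msum M N) A = emeasure M A + emeasure N A"
proof (cases "A \<in> sets M")
  case True
  show ?thesis unfolding msum_def
  proof (rule emeasure_measure_of_sigma)
    show "sigma_algebra (space M) (sets M)" ..
    show "positive (sets M) (\<lambda>A. emeasure M A + emeasure N A)" by (simp add: positive_def)
    show "countably_additive (sets M) (\<lambda>A. emeasure M A + emeasure N A)"
    proof (rule countably_additiveI)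
      fix A :: "nat \<Rightarrow> _"  assume *: "range A \<subseteq> sets M" "disjoint_family A"
      then have **: "range A \<subseteq> sets N" using assms by simp
      show "(\<Sum>i. emeasure M (A i) + emeasure N (A i)) = emeasure M (\<Union>i. A i) + emeasure N (\<Union>i. A i)"
        using * ** by (simp add: suminf_add[symmetric] suminf_emeasure)
    qed
  qed (fact True)
next
  case False then show ?thesis using assms by (simp add: emeasure_notin_sets)
qed

lemma nn_integral_msum:
  assumes N: "sets N = sets M" and f: "f \<in> borel_measurable M"
  shows "(\<integral>\<^sup>+x. f x \<partial>msum M N) = (\<integral>\<^sup>+x. f x \<partial>M) + (\<integral>\<^sup>+x. f x \<partial>N)"
  using f
proof (induct rule: borel_measurable_induct)
  case (cong f g)
  have "(\<integral>\<^sup>+x. f x \<partial>msum M N) = (\<integral>\<^sup>+x. g x \<partial>msum M N)"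
    by (intro nn_integral_cong) (use cong in auto)
  moreover have "(\<integral>\<^sup>+x. f x \<partial>M) = (\<integral>\<^sup>+x. g x \<partial>M)"
    by (intro nn_integral_cong) (use cong in auto)
  moreover have "(\<integral>\<^sup>+x. f x \<partial>N) = (\<integral>\<^sup>+x. g x \<partial>N)"
    by (intro nn_integral_cong) (use cong N sets_eq_imp_space_eq[OF N] in auto)
  ultimately show ?case using cong by simp
next
  case (set A)
  then show ?case using N by (simp add: emeasure_msum)
next
  case (mult u c)
  have [measurable]: "u \<in> borel_measurable N" using mult N by (simp cong: measurable_cong_sets)
  show ?case using mult by (simp add: nn_integral_cmult distrib_left)
next
  case (add u v)
  have [measurable]: "u \<in> borel_measurable N" "v \<in> borel_measurable N" using add N by (simp_all cong: measurable_cong_sets)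
  show ?case using add by (simp add: nn_integral_add add_ac)
next
  case (seq U)
  have [measurable]: "\<And>i. U i \<in> borel_measurable N" using seq N by (simp cong: measurable_cong_sets)
  have [measurable]: "\<And>i. U i \<in> borel_measurable (msum M N)" using seq by (simp cong: measurable_cong_sets)
  have "(\<integral>\<^sup>+x. (SUP i. U i) x \<partial>msum M N) = (\<integral>\<^sup>+x. (SUP i. U i x) \<partial>msum M N)"
    by (simp add: SUP_apply image_comp)
  also have "\<dots> = (SUP i. \<integral>\<^sup>+x. U i x \<partial>msum M N)"
    using seq by (intro nn_integral_monotone_convergence_SUP) auto
  also have "\<dots> = (SUP i. (\<integral>\<^sup>+x. U i x \<partial>M) + (\<integral>\<^sup>+x. U i x \<partial>N))"
    using seq by simp
  also have "\<dots> = (SUP i. \<integral>\<^sup>+x. U i x \<partial>M) + (SUP i. \<integral>\<^sup>+x. U i x \<partial>N)"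
    by (rule ennreal_SUP_add) (use seq in \<open>auto intro!: incseq_nn_integral\<close>)
  also have "\<dots> = (\<integral>\<^sup>+x. (SUP i. U i x) \<partial>M) + (\<integral>\<^sup>+x. (SUP i. U i x) \<partial>N)"
    using seq by (simp add: nn_integral_monotone_convergence_SUP)
  also have "\<dots> = (\<integral>\<^sup>+x. (SUP i. U i) x \<partial>M) + (\<integral>\<^sup>+x. (SUP i. U i) x \<partial>N)"
    by (simp add: SUP_apply image_comp)
  finally show ?case .
qed

lemma integrable_msum:
  fixes f :: "'a \<Rightarrow> 'b::{banach, second_countable_topology}"
  assumes N: "sets N = sets M" and f: "integrable (msum M N) f"
  shows "integrable M f" "integrable N f"
proof -
  have fm: "f \<in> borel_measurable (msum M N)" using f by auto
  then have [measurable]: "f \<in> borel_measurable M" "f \<in> borel_measurable N"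
    using N by (simp_all cong: measurable_cong_sets)
  have eq: "(\<integral>\<^sup>+x. norm (f x) \<partial>msum M N) = (\<integral>\<^sup>+x. norm (f x) \<partial>M) + (\<integral>\<^sup>+x. norm (f x) \<partial>N)"
    using N by (intro nn_integral_msum) auto
  have "(\<integral>\<^sup>+x. norm (f x) \<partial>msum M N) < \<infinity>" using f unfolding integrable_iff_bounded by blast
  then have "(\<integral>\<^sup>+x. norm (f x) \<partial>M) < \<infinity>" "(\<integral>\<^sup>+x. norm (f x) \<partial>N) < \<infinity>"
    unfolding eq by (auto simp: top_unique)
  then show "integrable M f" "integrable N f" unfolding integrable_iff_bounded by auto
qed

lemma integral_msum:
  fixes f :: "'a \<Rightarrow> 'b::{banach, second_countable_topology}"
  assumes N: "sets N = sets M" and f: "integrable (msum M N) f"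
  shows "integral\<^sup>L (msum M N) f = integral\<^sup>L M f + integral\<^sup>L N f"
  using f
proof (induct rule: integrable_induct)
  case (base A c)
  have "emeasure M A < \<infinity>" "emeasure N A < \<infinity>" using base N
    by (auto simp: emeasure_msum top_unique)
  then show ?case using base N
    by (simp add: emeasure_msum measure_def enn2real_plus scaleR_add_left)
next
  case (add f g)
  have "integrable M f" "integrable N f" "integrable M g" "integrable N g"
    using add integrable_msum[OF N] by auto
  then show ?case using add by (simp add: integral_add)
next
  case (lim f s)
  have iM: "integrable M (s i)" "integrable N (s i)" for i using lim(1) integrable_msum[OF N] by blast+
  have fM: "integrable M f" "integrable N f" using lim(5) integrable_msum[OF N] by blast+
  have sp: "space N = space M" using N by (rule sets_eq_imp_space_eq)
  have L: "(\<lambda>i. integral\<^sup>L K (s i)) \<longlonglongrightarrow> integral\<^sup>L K f"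
    if "K \<in> {M, N, msum M N}" for K
  proof (rule integral_dominated_convergence[where w="\<lambda>x. 2 * norm (f x)"])
    have iK: "integrable K f" "\<And>i. integrable K (s i)" using that fM iM lim by auto
    show "f \<in> borel_measurable K" "\<And>i. s i \<in> borel_measurable K" using iK by auto
    show "integrable K (\<lambda>x. 2 * norm (f x))" using iK by auto
    show "AE x in K. (\<lambda>i. s i x) \<longlonglongrightarrow> f x" using lim that sp by auto
    show "\<And>i. AE x in K. norm (s i x) \<le> 2 * norm (f x)" using lim that sp by auto
  qed
  have "(\<lambda>i. integral\<^sup>L (msum M N) (s i)) \<longlonglongrightarrow> integral\<^sup>L M f + integral\<^sup>L N f"
    using lim by (simp add: tendsto_add L)
  then show ?case using L[of "msum M N"] by (auto intro: LIMSEQ_unique)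
qed



definition pv :: "'a measure \<Rightarrow> ('a set \<Rightarrow> real) \<Rightarrow> 'a set \<Rightarrow> ennreal" where
  "pv M \<nu> A = (SUP B\<in>{B\<in>sets M. B \<subseteq> A}. ennreal (\<nu> B))"

lemma lower_is_upper: "lower_variation M \<nu> = upper_variation M (\<lambda>A. - \<nu> A)"
  by (simp add: lower_variation_def upper_variation_def)

lemma signed_measure_uminus: "signed_measure M \<nu> \<Longrightarrow> signed_measure M (\<lambda>A. - \<nu> A)"
  unfolding signed_measure_def by (simp add: sums_minus)

lemma signed_measure_add:
  assumes "signed_measure M \<nu>" "A \<in> sets M" "B \<in> sets M" "A \<inter> B = {}"
  shows "\<nu> (A \<union> B) = \<nu> A + \<nu> B"
proof -
  define F where "F n = (if n = 0 then A else if n = Suc 0 then B else {})" for n :: nat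
  have r: "range F \<subseteq> sets M" using assms by (auto simp: F_def)
  have d: "disjoint_family F" using assms unfolding disjoint_family_on_def F_def by auto
  have u: "(\<Union>n. F n) = A \<union> B" unfolding F_def by (auto split: if_splits)
  have s1: "(\<lambda>n. \<nu> (F n)) sums \<nu> (A \<union> B)" using assms(1) r d u unfolding signed_measure_def by metis
  have s2: "(\<lambda>n. \<nu> (F n)) sums (\<Sum>n\<in>{0, Suc 0}. \<nu> (F n))"
    by (rule sums_finite) (use assms(1) in \<open>auto simp: F_def signed_measure_def\<close>)
  show ?thesis using sums_unique2[OF s1 s2] by (simp add: F_def)
qed

lemma signed_measure_diff:
  assumes "signed_measure M \<nu>" "A \<in> sets M" "B \<in> sets M" "B \<subseteq> A"
  shows "\<nu> (A - B) = \<nu> A - \<nu> B"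
proof -
  have "\<nu> ((A - B) \<union> B) = \<nu> (A - B) + \<nu> B" using assms by (intro signed_measure_add) auto
  moreover have "(A - B) \<union> B = A" using assms by auto
  ultimately show ?thesis by simp
qed

lemma ennreal_sum_le: "ennreal (x + y) \<le> ennreal x + ennreal y"
proof (cases "x < 0")
  case True
  then have "ennreal (x + y) \<le> ennreal y" by (intro ennreal_leI) auto
  also have "\<dots> \<le> ennreal x + ennreal y" by (rule add_increasing) auto
  finally show ?thesis .
next
  case False
  show ?thesis
  proof (cases "y < 0")
    case True
    then have "ennreal (x + y) \<le> ennreal x" by (intro ennreal_leI) auto
    also have "\<dots> \<le> ennreal x + ennreal y" by (rule add_increasing2) auto
    finally show ?thesis .
  next
    case False
    with \<open>\<not> x < 0\<close> show ?thesis by (simp add: ennreal_plus)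
  qed
qed

lemma pv_mono: "A \<subseteq> A' \<Longrightarrow> pv M \<nu> A \<le> pv M \<nu> A'"
  unfolding pv_def by (rule SUP_subset_mono) auto

lemma pv_ge: "B \<in> sets M \<Longrightarrow> B \<subseteq> A \<Longrightarrow> ennreal (\<nu> B) \<le> pv M \<nu> A"
  unfolding pv_def by (rule SUP_upper) auto

lemma pv_empty: "signed_measure M \<nu> \<Longrightarrow> pv M \<nu> {} = 0"
  unfolding pv_def signed_measure_def by simp

lemma pv_add:
  assumes s: "signed_measure M \<nu>" and A: "A \<in> sets M" and C: "C \<in> sets M" and d: "A \<inter> C = {}"
  shows "pv M \<nu> (A \<union> C) = pv M \<nu> A + pv M \<nu> C"
proof (rule antisym)
  show "pv M \<nu> (A \<union> C) \<le> pv M \<nu> A + pv M \<nu> C"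
    unfolding pv_def[of M \<nu> "A \<union> C"]
  proof (rule SUP_least)
    fix B assume B: "B \<in> {B \<in> sets M. B \<subseteq> A \<union> C}"
    have "\<nu> B = \<nu> (B \<inter> A) + \<nu> (B \<inter> C)"
    proof -
      have "B = (B \<inter> A) \<union> (B \<inter> C)" using B by auto
      then have "\<nu> B = \<nu> ((B \<inter> A) \<union> (B \<inter> C))" by simp
      also have "\<dots> = \<nu> (B \<inter> A) + \<nu> (B \<inter> C)" using B A C d s by (intro signed_measure_add) auto
      finally show ?thesis .
    qed
    then have "ennreal (\<nu> B) \<le> ennreal (\<nu> (B \<inter> A)) + ennreal (\<nu> (B \<inter> C))"
      using ennreal_sum_le by simp
    also have "\<dots> \<le> pv M \<nu> A + pv M \<nu> C"
      using B A C by (intro add_mono pv_ge) auto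
    finally show "ennreal (\<nu> B) \<le> pv M \<nu> A + pv M \<nu> C" .
  qed
next
  have key: "ennreal (\<nu> B1) + ennreal (\<nu> B2) \<le> pv M \<nu> (A \<union> C)"
    if B1: "B1 \<in> sets M" "B1 \<subseteq> A" and B2: "B2 \<in> sets M" "B2 \<subseteq> C" for B1 B2
  proof (cases "\<nu> B1 \<ge> 0 \<and> \<nu> B2 \<ge> 0")
    case True
    have "\<nu> (B1 \<union> B2) = \<nu> B1 + \<nu> B2" using B1 B2 d s by (intro signed_measure_add) auto
    then have "ennreal (\<nu> B1) + ennreal (\<nu> B2) = ennreal (\<nu> (B1 \<union> B2))"
      using True by (simp add: ennreal_plus)
    also have "\<dots> \<le> pv M \<nu> (A \<union> C)" using B1 B2 by (intro pv_ge) auto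
    finally show ?thesis .
  next
    case False
    then consider "\<nu> B1 < 0" | "\<nu> B2 < 0" by linarith
    then show ?thesis
    proof cases
      case 1
      then have "ennreal (\<nu> B1) = 0" by (simp add: ennreal_neg)
      moreover have "ennreal (\<nu> B2) \<le> pv M \<nu> (A \<union> C)" using B2 by (intro pv_ge) auto
      ultimately show ?thesis by simp
    next
      case 2
      then have "ennreal (\<nu> B2) = 0" by (simp add: ennreal_neg)
      moreover have "ennreal (\<nu> B1) \<le> pv M \<nu> (A \<union> C)" using B1 by (intro pv_ge) auto
      ultimately show ?thesis by simp
    qed
  qed
  let ?S1 = "{B \<in> sets M. B \<subseteq> A}" and ?S2 = "{B \<in> sets M. B \<subseteq> C}"
  have ne1: "?S1 \<noteq> {}" and ne2: "?S2 \<noteq> {}" by (auto intro!: exI[of _ "{}"])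
  have "pv M \<nu> A + pv M \<nu> C = (SUP B1\<in>?S1. ennreal (\<nu> B1) + pv M \<nu> C)"
    unfolding pv_def[of M \<nu> A] by (rule ennreal_SUP_add_left[OF ne1, symmetric])
  also have "\<dots> \<le> pv M \<nu> (A \<union> C)"
  proof (rule SUP_least)
    fix B1 assume B1: "B1 \<in> ?S1"
    have "ennreal (\<nu> B1) + pv M \<nu> C = (SUP B2\<in>?S2. ennreal (\<nu> B1) + ennreal (\<nu> B2))"
      unfolding pv_def[of M \<nu> C] by (rule ennreal_SUP_add_right[OF ne2])
    also have "\<dots> \<le> pv M \<nu> (A \<union> C)"
    proof (rule SUP_least)
      fix B2 assume B2: "B2 \<in> ?S2"
      show "ennreal (\<nu> B1) + ennreal (\<nu> B2) \<le> pv M \<nu> (A \<union> C)"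
        using B1 B2 by (intro key) auto
    qed
    finally show "ennreal (\<nu> B1) + pv M \<nu> C \<le> pv M \<nu> (A \<union> C)" .
  qed
  finally show "pv M \<nu> A + pv M \<nu> C \<le> pv M \<nu> (A \<union> C)" .
qed

lemma ennreal_sums_le:
  assumes "f sums s"
  shows "ennreal s \<le> (\<Sum>n. ennreal (f n))"
proof -
  have lim: "(\<lambda>N. ennreal (\<Sum>n<N. f n)) \<longlonglongrightarrow> ennreal s"
    using assms unfolding sums_def by (rule tendsto_ennrealI)
  have "ennreal (\<Sum>n<N. f n) \<le> (\<Sum>n<N. ennreal (f n))" for N
  proof (induct N)
    case 0 then show ?case by simp
  next
    case (Suc N)
    have "ennreal (\<Sum>n<Suc N. f n) = ennreal ((\<Sum>n<N. f n) + f N)" by simp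
    also have "\<dots> \<le> ennreal (\<Sum>n<N. f n) + ennreal (f N)" by (rule ennreal_sum_le)
    also have "\<dots> \<le> (\<Sum>n<N. ennreal (f n)) + ennreal (f N)" using Suc by (rule add_right_mono)
    finally show ?case by simp
  qed
  also have "(\<Sum>n<N. ennreal (f n)) \<le> (\<Sum>n. ennreal (f n))" for N
    by (rule sum_le_suminf) auto
  finally have "\<And>N. ennreal (\<Sum>n<N. f n) \<le> (\<Sum>n. ennreal (f n))" .
  then show ?thesis using lim by (intro LIMSEQ_le_const2) auto
qed

lemma pv_finite_union:
  fixes A :: "nat \<Rightarrow> 'a set"
  assumes s: "signed_measure M \<nu>" and A: "range A \<subseteq> sets M" and d: "disjoint_family A"
  shows "pv M \<nu> (\<Union>n<N. A n) = (\<Sum>n<N. pv M \<nu> (A n))"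
proof (induct N)
  case 0 then show ?case using pv_empty[OF s] by simp
next
  case (Suc N)
  have u: "(\<Union>n<Suc N. A n) = (\<Union>n<N. A n) \<union> A N" by (auto simp: lessThan_Suc)
  have m: "(\<Union>n<N. A n) \<in> sets M" using A by (intro sets.finite_UN) auto
  have AN: "A N \<in> sets M" using A by blast
  have dd0: "A n \<inter> A N = {}" if "n < N" for n
    using d that unfolding disjoint_family_on_def by simp
  have dd: "(\<Union>n<N. A n) \<inter> A N = {}" using dd0 by blast
  have "pv M \<nu> (\<Union>n<Suc N. A n) = pv M \<nu> (\<Union>n<N. A n) + pv M \<nu> (A N)"
    unfolding u by (rule pv_add[OF s m AN dd])
  also have "\<dots> = (\<Sum>n<N. pv M \<nu> (A n)) + pv M \<nu> (A N)" by (simp only: Suc)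
  finally show ?case by (simp only: sum.lessThan_Suc)
qed

lemma pv_countably_additive:
  assumes s: "signed_measure M \<nu>"
  shows "countably_additive (sets M) (pv M \<nu>)"
proof (rule countably_additiveI)
  fix A :: "nat \<Rightarrow> 'a set" assume A: "range A \<subseteq> sets M" and d: "disjoint_family A"
  show "(\<Sum>i. pv M \<nu> (A i)) = pv M \<nu> (\<Union>i. A i)"
  proof (rule antisym)
    show "(\<Sum>i. pv M \<nu> (A i)) \<le> pv M \<nu> (\<Union>i. A i)"
      unfolding suminf_eq_SUP
    proof (rule SUP_least)
      fix N
      have "(\<Sum>i<N. pv M \<nu> (A i)) = pv M \<nu> (\<Union>n<N. A n)"
        using pv_finite_union[OF s A d] by simp
      also have "\<dots> \<le> pv M \<nu> (\<Union>i. A i)" by (rule pv_mono) blast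
      finally show "(\<Sum>i<N. pv M \<nu> (A i)) \<le> pv M \<nu> (\<Union>i. A i)" .
    qed
  next
    show "pv M \<nu> (\<Union>i. A i) \<le> (\<Sum>i. pv M \<nu> (A i))"
      unfolding pv_def[of M \<nu> "\<Union>i. A i"]
    proof (rule SUP_least)
      fix B assume B: "B \<in> {B \<in> sets M. B \<subseteq> (\<Union>i. A i)}"
      have Bs: "B \<in> sets M" and BA: "B \<subseteq> (\<Union>i. A i)" using B by auto
      have r: "range (\<lambda>n. B \<inter> A n) \<subseteq> sets M" using A Bs by (auto intro: sets.Int)
      have dd: "disjoint_family (\<lambda>n. B \<inter> A n)" using d unfolding disjoint_family_on_def by blast
      have u: "(\<Union>n. B \<inter> A n) = B" using BA by blast
      have sm: "\<forall>F::nat \<Rightarrow> 'a set. range F \<subseteq> sets M \<longrightarrow> disjoint_family F \<longrightarrow> (\<lambda>n. \<nu> (F n)) sums \<nu> (\<Union>n. F n)"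
        using s unfolding signed_measure_def by blast
      have "(\<lambda>n. \<nu> (B \<inter> A n)) sums \<nu> (\<Union>n. B \<inter> A n)"
        using sm[rule_format, OF r dd] .
      then have "(\<lambda>n. \<nu> (B \<inter> A n)) sums \<nu> B" by (simp only: u)
      then have "ennreal (\<nu> B) \<le> (\<Sum>n. ennreal (\<nu> (B \<inter> A n)))" by (rule ennreal_sums_le)
      also have "\<dots> \<le> (\<Sum>n. pv M \<nu> (A n))"
      proof (rule suminf_le)
        fix n show "ennreal (\<nu> (B \<inter> A n)) \<le> pv M \<nu> (A n)"
          using r by (intro pv_ge) auto
      qed auto
      finally show "ennreal (\<nu> B) \<le> (\<Sum>n. pv M \<nu> (A n))" .
    qed
  qed
qed

lemma sets_upper_variation[simp]: "sets (upper_variation M \<nu>) = sets M"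
  by (simp add: upper_variation_def)

lemma space_upper_variation[simp]: "space (upper_variation M \<nu>) = space M"
  by (simp add: upper_variation_def)

lemma emeasure_upper_variation:
  assumes s: "signed_measure M \<nu>" and A: "A \<in> sets M"
  shows "emeasure (upper_variation M \<nu>) A = pv M \<nu> A"
  unfolding upper_variation_def pv_def[symmetric]
proof (rule emeasure_measure_of_sigma)
  show "sigma_algebra (space M) (sets M)" ..
  show "positive (sets M) (pv M \<nu>)" using pv_empty[OF s] by (simp add: positive_def)
  show "countably_additive (sets M) (pv M \<nu>)" by (rule pv_countably_additive[OF s])
qed (fact A)

lemma jordan_aux:
  assumes s: "signed_measure M \<nu>" and A: "A \<in> sets M" and fin: "pv M (\<lambda>A. - \<nu> A) A < \<infinity>"
  shows "pv M \<nu> A \<le> ennreal (\<nu> A + enn2real (pv M (\<lambda>A. - \<nu> A) A))"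
  unfolding pv_def[of M \<nu> A]
proof (rule SUP_least)
  fix B assume B: "B \<in> {B \<in> sets M. B \<subseteq> A}"
  let ?q = "enn2real (pv M (\<lambda>A. - \<nu> A) A)"
  have "ennreal (- \<nu> (A - B)) \<le> pv M (\<lambda>A. - \<nu> A) A" using A B by (intro pv_ge) auto
  also have "\<dots> = ennreal ?q" using fin by (simp add: ennreal_enn2real less_top)
  finally have "- \<nu> (A - B) \<le> ?q" by (simp add: ennreal_le_iff enn2real_nonneg)
  moreover have "\<nu> (A - B) = \<nu> A - \<nu> B" using s A B by (intro signed_measure_diff) auto
  ultimately have "\<nu> B \<le> \<nu> A + ?q" by simp
  then show "ennreal (\<nu> B) \<le> ennreal (\<nu> A + ?q)" by (rule ennreal_leI)
qed

lemma jordan: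
  assumes s: "signed_measure M \<nu>" and A: "A \<in> sets M"
    and fin1: "pv M \<nu> A < \<infinity>" and fin2: "pv M (\<lambda>A. - \<nu> A) A < \<infinity>"
  shows "\<nu> A = enn2real (pv M \<nu> A) - enn2real (pv M (\<lambda>A. - \<nu> A) A)"
proof -
  let ?p = "enn2real (pv M \<nu> A)" and ?q = "enn2real (pv M (\<lambda>A. - \<nu> A) A)"
  have p0: "?p \<ge> 0" "?q \<ge> 0" by auto
  have e1: "pv M \<nu> A = ennreal ?p" using fin1 by (simp add: ennreal_enn2real less_top)
  have e2: "pv M (\<lambda>A. - \<nu> A) A = ennreal ?q" using fin2 by (simp add: ennreal_enn2real less_top)
  have "ennreal (- \<nu> A) \<le> ennreal ?q" using A e2 pv_ge[of A M A "\<lambda>A. - \<nu> A"] by simp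
  then have h1: "- \<nu> A \<le> ?q" by (simp add: ennreal_le_iff)
  have "ennreal (\<nu> A) \<le> ennreal ?p" using A e1 pv_ge[of A M A \<nu>] by simp
  then have h2: "\<nu> A \<le> ?p" by (simp add: ennreal_le_iff)
  have "ennreal ?p \<le> ennreal (\<nu> A + ?q)" using jordan_aux[OF s A fin2] e1 by simp
  then have i1: "?p \<le> \<nu> A + ?q" using h1 by (simp add: ennreal_le_iff)
  have s': "signed_measure M (\<lambda>A. - \<nu> A)" using s by (rule signed_measure_uminus)
  have "ennreal ?q \<le> ennreal (- \<nu> A + ?p)" using jordan_aux[OF s' A] fin1 e2 by simp
  then have i2: "?q \<le> - \<nu> A + ?p" using h2 by (simp add: ennreal_le_iff)
  show ?thesis using i1 i2 by simp
qed



lemma space_borel_of[simp]: "space (borel_of X) = topspace X"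
  unfolding borel_of_def by (simp add: space_measure_of_conv)

lemma openin_in_borel_of: "openin X U \<Longrightarrow> U \<in> sets (borel_of X)"
proof -
  assume U: "openin X U"
  have "{U. openin X U} \<subseteq> Pow (topspace X)" using openin_subset by auto
  then have "sets (borel_of X) = sigma_sets (topspace X) {U. openin X U}"
    unfolding borel_of_def by (rule sets_measure_of)
  then show ?thesis using U by (auto intro: sigma_sets.Basic)
qed

lemma radon_outer_diff:
  assumes r: "radon X M" and A: "A \<in> sets M" and e: "0 < e"
  shows "\<exists>U. openin X U \<and> A \<subseteq> U \<and> U \<in> sets M \<and> emeasure M (U - A) \<le> ennreal e"
proof -
  interpret finite_measure M using r by (simp add: radon_def)
  have sM: "sets M = sets (borel_of X)" using r by (simp add: radon_def)
  have "\<forall>A\<in>sets M. emeasure M A = (INF U\<in>{U. openin X U \<and> A \<subseteq> U}. emeasure M U)"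
    using r unfolding radon_def by blast
  then have eq: "emeasure M A = (INF U\<in>{U. openin X U \<and> A \<subseteq> U}. emeasure M U)"
    using A by blast
  have fin: "emeasure M A \<noteq> \<infinity>" by simp
  have "emeasure M A < emeasure M A + ennreal e"
    using fin e by (metis add.right_neutral ennreal_add_left_cancel_less ennreal_less_zero_iff less_eq_real_def)
  then have "(INF U\<in>{U. openin X U \<and> A \<subseteq> U}. emeasure M U) < emeasure M A + ennreal e"
    using eq by simp
  then obtain U where U: "openin X U" "A \<subseteq> U" "emeasure M U < emeasure M A + ennreal e"
    by (auto simp: INF_less_iff)
  have Us: "U \<in> sets M" using U(1) sM openin_in_borel_of by auto
  have "emeasure M U = emeasure M A + emeasure M (U - A)"
    using A Us U(2) by (metis Diff_disjoint Diff_partition plus_emeasure sets.Diff)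
  then have "emeasure M (U - A) < ennreal e" using U(3) fin by (simp add: ennreal_add_left_cancel_less)
  then show ?thesis using U Us by (auto intro!: exI[of _ U] less_imp_le)
qed

lemma radon_inner_diff:
  assumes r: "radon X M" and A: "A \<in> sets M" and e: "0 < e"
    and cm: "\<And>K. compactin X K \<Longrightarrow> K \<in> sets (borel_of X)"
  shows "\<exists>K. compactin X K \<and> K \<subseteq> A \<and> K \<in> sets M \<and> emeasure M (A - K) \<le> ennreal e"
proof -
  interpret finite_measure M using r by (simp add: radon_def)
  have sM: "sets M = sets (borel_of X)" using r by (simp add: radon_def)
  have "\<forall>A\<in>sets M. emeasure M A = (SUP K\<in>{K. compactin X K \<and> K \<subseteq> A}. emeasure M K)"
    using r unfolding radon_def by blast
  then have eq: "emeasure M A = (SUP K\<in>{K. compactin X K \<and> K \<subseteq> A}. emeasure M K)"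
    using A by blast
  have fin: "emeasure M A \<noteq> \<infinity>" by simp
  have ne: "{K. compactin X K \<and> K \<subseteq> A} \<noteq> {}" by (auto intro!: exI[of _ "{}"])
  have "emeasure M A < emeasure M A + ennreal e"
    using fin e by (metis add.right_neutral ennreal_add_left_cancel_less ennreal_less_zero_iff less_eq_real_def)
  also have "\<dots> = (SUP K\<in>{K. compactin X K \<and> K \<subseteq> A}. emeasure M K + ennreal e)"
    using eq ennreal_SUP_add_left[OF ne] by simp
  finally obtain K where K: "compactin X K" "K \<subseteq> A" "emeasure M A < emeasure M K + ennreal e"
    by (auto simp: less_SUP_iff)
  have Ks: "K \<in> sets M" using K(1) sM cm by auto
  have "emeasure M A = emeasure M K + emeasure M (A - K)"
    using A Ks K(2) by (metis Diff_disjoint Diff_partition plus_emeasure sets.Diff)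
  then have "emeasure M (A - K) < ennreal e" using K(3) by (simp add: ennreal_add_left_cancel_less)
  then show ?thesis using K Ks by (auto intro!: exI[of _ K] less_imp_le)
qed

lemma radon_from_diff:
  assumes sN: "sets N = sets (borel_of X)" and fN: "finite_measure N"
    and outer: "\<And>A e. A \<in> sets N \<Longrightarrow> 0 < e \<Longrightarrow> \<exists>U. openin X U \<and> A \<subseteq> U \<and> U \<in> sets N \<and> emeasure N (U - A) \<le> ennreal e"
    and inner: "\<And>A e. A \<in> sets N \<Longrightarrow> 0 < e \<Longrightarrow> \<exists>K. compactin X K \<and> K \<subseteq> A \<and> K \<in> sets N \<and> emeasure N (A - K) \<le> ennreal e"
  shows "radon X N"
  unfolding radon_def
proof (intro conjI ballI)
  show "sets N = sets (borel_of X)" by fact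
  show "finite_measure N" by fact
next
  fix A assume A: "A \<in> sets N"
  show "emeasure N A = (INF U\<in>{U. openin X U \<and> A \<subseteq> U}. emeasure N U)"
  proof (rule antisym)
    show "emeasure N A \<le> (INF U\<in>{U. openin X U \<and> A \<subseteq> U}. emeasure N U)"
    proof (rule INF_greatest)
      fix U assume "U \<in> {U. openin X U \<and> A \<subseteq> U}"
      then have "U \<in> sets N" "A \<subseteq> U" using sN openin_in_borel_of by auto
      then show "emeasure N A \<le> emeasure N U" by (rule emeasure_mono[rotated])
    qed
    show "(INF U\<in>{U. openin X U \<and> A \<subseteq> U}. emeasure N U) \<le> emeasure N A"
    proof (rule ennreal_le_epsilon)
      fix e :: real assume e: "0 < e"
      obtain U where U: "openin X U" "A \<subseteq> U" "U \<in> sets N" "emeasure N (U - A) \<le> ennreal e"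
        using outer[OF A e] by blast
      have "(INF U\<in>{U. openin X U \<and> A \<subseteq> U}. emeasure N U) \<le> emeasure N U"
        using U by (intro INF_lower) auto
      also have "\<dots> = emeasure N A + emeasure N (U - A)"
        using A U by (metis Diff_disjoint Diff_partition plus_emeasure sets.Diff)
      also have "\<dots> \<le> emeasure N A + ennreal e" using U by (intro add_left_mono)
      finally show "(INF U\<in>{U. openin X U \<and> A \<subseteq> U}. emeasure N U) \<le> emeasure N A + ennreal e" .
    qed
  qed
next
  fix A assume A: "A \<in> sets N"
  show "emeasure N A = (SUP K\<in>{K. compactin X K \<and> K \<subseteq> A}. emeasure N K)"
  proof (rule antisym)
    show "(SUP K\<in>{K. compactin X K \<and> K \<subseteq> A}. emeasure N K) \<le> emeasure N A"
      using A by (auto intro!: SUP_least emeasure_mono)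
    show "emeasure N A \<le> (SUP K\<in>{K. compactin X K \<and> K \<subseteq> A}. emeasure N K)"
    proof (rule ennreal_le_epsilon)
      fix e :: real assume e: "0 < e"
      obtain K where K: "compactin X K" "K \<subseteq> A" "K \<in> sets N" "emeasure N (A - K) \<le> ennreal e"
        using inner[OF A e] by blast
      have "emeasure N A = emeasure N K + emeasure N (A - K)"
        using A K by (metis Diff_disjoint Diff_partition plus_emeasure sets.Diff)
      also have "\<dots> \<le> (SUP K\<in>{K. compactin X K \<and> K \<subseteq> A}. emeasure N K) + ennreal e"
        using K by (intro add_mono SUP_upper) auto
      finally show "emeasure N A \<le> (SUP K\<in>{K. compactin X K \<and> K \<subseteq> A}. emeasure N K) + ennreal e" .
    qed
  qed
qed

lemma radon_dominated:
  assumes r1: "radon X M1" and r2: "radon X M2"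
    and sN: "sets N = sets (borel_of X)" and fN: "finite_measure N"
    and dom: "\<And>E. E \<in> sets N \<Longrightarrow> emeasure N E \<le> emeasure M1 E + emeasure M2 E"
    and cm: "\<And>K. compactin X K \<Longrightarrow> K \<in> sets (borel_of X)"
  shows "radon X N"
proof (rule radon_from_diff[OF sN fN])
  have s1: "sets M1 = sets (borel_of X)" and s2: "sets M2 = sets (borel_of X)"
    using r1 r2 by (simp_all add: radon_def)
  fix A and e :: real assume A: "A \<in> sets N" and e: "0 < e"
  have e2: "0 < e / 2" using e by simp
  have ee: "ennreal (e/2) + ennreal (e/2) = ennreal e" using e by (simp add: ennreal_plus[symmetric])
  obtain U1 where U1: "openin X U1" "A \<subseteq> U1" "U1 \<in> sets M1" "emeasure M1 (U1 - A) \<le> ennreal (e/2)"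
    using radon_outer_diff[OF r1 _ e2, of A] A sN s1 by auto
  obtain U2 where U2: "openin X U2" "A \<subseteq> U2" "U2 \<in> sets M2" "emeasure M2 (U2 - A) \<le> ennreal (e/2)"
    using radon_outer_diff[OF r2 _ e2, of A] A sN s2 by auto
  show "\<exists>U. openin X U \<and> A \<subseteq> U \<and> U \<in> sets N \<and> emeasure N (U - A) \<le> ennreal e"
  proof (intro exI conjI)
    show "openin X (U1 \<inter> U2)" using U1 U2 by auto
    show "A \<subseteq> U1 \<inter> U2" using U1 U2 by auto
    show "U1 \<inter> U2 \<in> sets N" using U1 U2 sN s1 s2 by auto
    have "emeasure N (U1 \<inter> U2 - A) \<le> emeasure M1 (U1 \<inter> U2 - A) + emeasure M2 (U1 \<inter> U2 - A)"
      using U1 U2 A sN s1 s2 by (intro dom) auto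
    also have "\<dots> \<le> emeasure M1 (U1 - A) + emeasure M2 (U2 - A)"
      using U1 U2 A sN s1 s2 by (intro add_mono emeasure_mono) auto
    also have "\<dots> \<le> ennreal e" using U1 U2 ee by (metis add_mono)
    finally show "emeasure N (U1 \<inter> U2 - A) \<le> ennreal e" .
  qed
next
  have s1: "sets M1 = sets (borel_of X)" and s2: "sets M2 = sets (borel_of X)"
    using r1 r2 by (simp_all add: radon_def)
  fix A and e :: real assume A: "A \<in> sets N" and e: "0 < e"
  have e2: "0 < e / 2" using e by simp
  have ee: "ennreal (e/2) + ennreal (e/2) = ennreal e" using e by (simp add: ennreal_plus[symmetric])
  obtain K1 where K1: "compactin X K1" "K1 \<subseteq> A" "K1 \<in> sets M1" "emeasure M1 (A - K1) \<le> ennreal (e/2)"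
    using radon_inner_diff[OF r1 _ e2 cm, of A] A sN s1 by auto
  obtain K2 where K2: "compactin X K2" "K2 \<subseteq> A" "K2 \<in> sets M2" "emeasure M2 (A - K2) \<le> ennreal (e/2)"
    using radon_inner_diff[OF r2 _ e2 cm, of A] A sN s2 by auto
  show "\<exists>K. compactin X K \<and> K \<subseteq> A \<and> K \<in> sets N \<and> emeasure N (A - K) \<le> ennreal e"
  proof (intro exI conjI)
    show "compactin X (K1 \<union> K2)" using K1 K2 by (simp add: compactin_Un)
    show "K1 \<union> K2 \<subseteq> A" using K1 K2 by auto
    show "K1 \<union> K2 \<in> sets N" using K1 K2 sN s1 s2 by auto
    have "emeasure N (A - (K1 \<union> K2)) \<le> emeasure M1 (A - (K1 \<union> K2)) + emeasure M2 (A - (K1 \<union> K2))"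
      using K1 K2 A sN s1 s2 by (intro dom) auto
    also have "\<dots> \<le> emeasure M1 (A - K1) + emeasure M2 (A - K2)"
      using K1 K2 A sN s1 s2 by (intro add_mono emeasure_mono) auto
    also have "\<dots> \<le> ennreal e" using K1 K2 ee by (metis add_mono)
    finally show "emeasure N (A - (K1 \<union> K2)) \<le> ennreal e" .
  qed
qed

lemma Hausdorff_Gdelta: "Hausdorff_space Gdelta_top"
  unfolding Gdelta_top_def
  by (rule Hausdorff_space_subtopology) (metis Hausdorff_space_euclidean Hausdorff_space_product_topology)

lemma compact_in_borel_Gdelta: "compactin Gdelta_top K \<Longrightarrow> K \<in> sets (borel_of Gdelta_top)"
proof -
  assume "compactin Gdelta_top K"
  then have "closedin Gdelta_top K" using Hausdorff_Gdelta by (metis compactin_imp_closedin)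
  then have o: "openin Gdelta_top (topspace Gdelta_top - K)" by (simp add: closedin_def)
  have K: "K \<subseteq> topspace Gdelta_top" using \<open>closedin _ K\<close> closedin_subset by auto
  have "topspace Gdelta_top - (topspace Gdelta_top - K) \<in> sets (borel_of Gdelta_top)"
    using openin_in_borel_of[OF o] by (metis sets.compl_sets space_borel_of)
  then show ?thesis using K by (simp add: Diff_Diff_Int inf.absorb2)
qed



lemma eval_measurable: "(\<lambda>\<gamma>. \<gamma> g) \<in> borel_measurable (borel_of (Gdelta_top :: ('g::ab_group_add \<Rightarrow> quat) topology))"
proof (rule borel_measurableI)
  fix S :: "quat set" assume S: "open S"
  have c: "continuous_map Gdelta_top euclidean (\<lambda>\<gamma>::'g \<Rightarrow> quat. \<gamma> g)"
    unfolding Gdelta_top_def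
    by (rule continuous_map_from_subtopology) (rule continuous_map_product_projection, simp)
  have oS: "openin euclidean S" using S by (simp only: open_openin)
  have o: "openin Gdelta_top {x \<in> topspace Gdelta_top. x g \<in> S}"
    by (rule openin_continuous_map_preimage[OF c oS])
  have eq: "(\<lambda>\<gamma>. \<gamma> g) -` S \<inter> space (borel_of (Gdelta_top :: ('g \<Rightarrow> quat) topology)) = {x \<in> topspace Gdelta_top. x g \<in> S}"
    by (auto simp: space_borel_of)
  show "(\<lambda>\<gamma>. \<gamma> g) -` S \<inter> space (borel_of (Gdelta_top :: ('g \<Rightarrow> quat) topology)) \<in> sets (borel_of Gdelta_top)"
    unfolding eq by (rule openin_in_borel_of[OF o])
qed

lemma norm_eval_le: "x \<in> topspace Gdelta_top \<Longrightarrow> norm (x g) \<le> (1::real)"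
proof -
  assume "x \<in> topspace Gdelta_top"
  then have "x \<in> Gdelta" unfolding Gdelta_top_def topspace_subtopology by blast
  then have "x g \<in> qsphere" unfolding Gdelta_def by blast
  then show ?thesis by (simp add: qsphere_def)
qed

lemma eval_integrable:
  fixes M :: "('g::ab_group_add \<Rightarrow> quat) measure"
  assumes sM: "sets M = sets (borel_of Gdelta_top)" and fM: "finite_measure M"
  shows "integrable M (\<lambda>\<gamma>. \<gamma> g)"
proof -
  have sp: "space M = topspace Gdelta_top" using sets_eq_imp_space_eq[OF sM] by simp
  have "AE x in M. norm (x g) \<le> 1"
    by (rule AE_I2) (use sp norm_eval_le in blast)
  moreover have "(\<lambda>\<gamma>. \<gamma> g) \<in> borel_measurable M"
    using eval_measurable sM by (simp cong: measurable_cong_sets)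
  ultimately show ?thesis by (rule finite_measure.integrable_const_bound[OF fM])
qed

lemma RN_le_one:
  assumes fM: "finite_measure M" and sN: "sets N = sets M"
    and dom: "\<And>E. E \<in> sets M \<Longrightarrow> emeasure N E \<le> emeasure M E"
  shows "AE x in M. RN_deriv M N x \<le> 1"
proof -
  interpret finite_measure M by fact
  have ac: "absolutely_continuous M N"
    unfolding absolutely_continuous_def
  proof
    fix E assume "E \<in> null_sets M"
    then show "E \<in> null_sets N" using dom[of E] sN by (auto simp: null_sets_def)
  qed
  have dens: "density M (RN_deriv M N) = N" using density_RN_deriv[OF ac sN] .
  define A where "A = {x \<in> space M. 1 < RN_deriv M N x}"
  have A: "A \<in> sets M" unfolding A_def by measurable
  have "emeasure N A = emeasure (density M (RN_deriv M N)) A" by (simp only: dens)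
  also have "\<dots> = (\<integral>\<^sup>+x. RN_deriv M N x * indicator A x \<partial>M)"
    using A by (intro emeasure_density) auto
  finally have "(\<integral>\<^sup>+x. RN_deriv M N x * indicator A x \<partial>M) = emeasure N A" ..
  also have "\<dots> \<le> emeasure M A" using A by (rule dom)
  finally have le: "(\<integral>\<^sup>+x. RN_deriv M N x * indicator A x \<partial>M) \<le> emeasure M A" .
  have "(\<integral>\<^sup>+x. RN_deriv M N x * indicator A x \<partial>M)
      = (\<integral>\<^sup>+x. (RN_deriv M N x - 1) * indicator A x + indicator A x \<partial>M)"
  proof (rule nn_integral_cong)
    fix x assume "x \<in> space M"
    show "RN_deriv M N x * indicator A x = (RN_deriv M N x - 1) * indicator A x + indicator A x"
      by (cases "x \<in> A") (auto simp: A_def less_imp_le diff_add_cancel_ennreal)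
  qed
  also have "\<dots> = (\<integral>\<^sup>+x. (RN_deriv M N x - 1) * indicator A x \<partial>M) + emeasure M A"
    using A by (subst nn_integral_add) auto
  finally have eq: "(\<integral>\<^sup>+x. RN_deriv M N x * indicator A x \<partial>M) = (\<integral>\<^sup>+x. (RN_deriv M N x - 1) * indicator A x \<partial>M) + emeasure M A" .
  have "(\<integral>\<^sup>+x. (RN_deriv M N x - 1) * indicator A x \<partial>M) + emeasure M A \<le> emeasure M A"
    using le unfolding eq .
  then have "emeasure M A + (\<integral>\<^sup>+x. (RN_deriv M N x - 1) * indicator A x \<partial>M) \<le> emeasure M A + 0"
    by (simp only: add.commute[of "\<integral>\<^sup>+x. (RN_deriv M N x - 1) * indicator A x \<partial>M"] add_0_right)
  then have "emeasure M A = \<infinity> \<or> (\<integral>\<^sup>+x. (RN_deriv M N x - 1) * indicator A x \<partial>M) \<le> 0"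
    by (rule ennreal_add_left_cancel_le[THEN iffD1])
  moreover have "emeasure M A \<noteq> \<infinity>" using emeasure_finite[of A] by (simp add: infinity_ennreal_def)
  ultimately have "(\<integral>\<^sup>+x. (RN_deriv M N x - 1) * indicator A x \<partial>M) \<le> 0" by blast
  then have I0: "(\<integral>\<^sup>+x. (RN_deriv M N x - 1) * indicator A x \<partial>M) = 0" by (rule antisym) (rule zero_le)
  have mI: "(\<lambda>x. (RN_deriv M N x - 1) * indicator A x) \<in> borel_measurable M" using A by measurable
  have AE0: "AE x in M. (RN_deriv M N x - 1) * indicator A x = 0"
    using nn_integral_0_iff_AE[OF mI] I0 by blast
  have pt: "RN_deriv M N x \<le> 1" if x: "x \<in> space M" and e: "(RN_deriv M N x - 1) * indicator A x = 0" for x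
  proof (rule ccontr)
    assume "\<not> RN_deriv M N x \<le> 1"
    then have gt: "1 < RN_deriv M N x" by simp
    have xA: "x \<in> A" using x gt by (simp add: A_def)
    have "RN_deriv M N x - 1 \<noteq> 0"
    proof
      assume "RN_deriv M N x - 1 = 0"
      then have "RN_deriv M N x \<le> 1" by (rule ennreal_minus_eq_0)
      then show False using gt by simp
    qed
    then show False using e xA by simp
  qed
  have imp: "AE x in M. (RN_deriv M N x - 1) * indicator A x = 0 \<longrightarrow> RN_deriv M N x \<le> 1"
    by (rule AE_I2) (use pt in blast)
  show ?thesis by (rule AE_mp[OF AE0 imp])
qed



lemma integral_mu':
  fixes f :: "'a \<Rightarrow> 'b::{banach, second_countable_topology}" and M P L :: "'a measure"
  assumes sP: "sets P = sets M" and fM: "finite_measure M" and fP: "finite_measure P" and fL: "finite_measure L"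
    and Ld: "L = density M (\<lambda>x. ennreal (r x))" and rm: "r \<in> borel_measurable M" and r0: "\<And>x. 0 \<le> r x"
    and rc: "AE x in M. r x \<le> c" and c: "0 < c"
    and fm: "f \<in> borel_measurable M" and fb: "\<And>x. x \<in> space M \<Longrightarrow> norm (f x) \<le> B"
    and fM': "finite_measure (msum (density M (\<lambda>x. ennreal (1 - r x / c))) (density P (\<lambda>_. ennreal (1/c))))"
  shows "integral\<^sup>L (msum (density M (\<lambda>x. ennreal (1 - r x / c))) (density P (\<lambda>_. ennreal (1/c)))) f
       = integral\<^sup>L M f - (1/c) *\<^sub>R integral\<^sup>L L f + (1/c) *\<^sub>R integral\<^sup>L P f"
proof -
  let ?D1 = "density M (\<lambda>x. ennreal (1 - r x / c))" and ?D2 = "density P (\<lambda>_. ennreal (1/c))"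
  have sD: "sets ?D2 = sets ?D1" using sP by simp
  have spP: "space P = space M" using sets_eq_imp_space_eq[OF sP] .
  have hm: "(\<lambda>x. 1 - r x / c) \<in> borel_measurable M" using rm by measurable
  have h0: "AE x in M. 0 \<le> 1 - r x / c" using rc by eventually_elim (use c in simp)
  have fmP: "f \<in> borel_measurable P" using fm sP by (simp cong: measurable_cong_sets)
  have sL: "sets L = sets M" using Ld by simp
  have fmL: "f \<in> borel_measurable L" using fm sL by (simp cong: measurable_cong_sets)
  have spL: "space L = space M" using sets_eq_imp_space_eq[OF sL] .
  have iM: "integrable M f"
    using fm fb by (intro finite_measure.integrable_const_bound[OF fM, where B=B]) (auto intro: AE_I2)
  have iL: "integrable L f"
    using fmL fb spL by (intro finite_measure.integrable_const_bound[OF fL, where B=B]) (auto intro: AE_I2)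
  have iP: "integrable P f"
    using fmP fb spP by (intro finite_measure.integrable_const_bound[OF fP, where B=B]) (auto intro: AE_I2)
  have iLr: "integrable M (\<lambda>x. r x *\<^sub>R f x)"
    using iL unfolding Ld by (subst (asm) integrable_density) (use fm rm r0 in auto)
  have iS: "integrable (msum ?D1 ?D2) f"
  proof -
    have "f \<in> borel_measurable (msum ?D1 ?D2)" using fm by (simp cong: measurable_cong_sets)
    moreover have "space (msum ?D1 ?D2) = space M" by simp
    ultimately show ?thesis using fb
      by (intro finite_measure.integrable_const_bound[OF fM', where B=B]) (auto intro: AE_I2)
  qed
  have "integral\<^sup>L (msum ?D1 ?D2) f = integral\<^sup>L ?D1 f + integral\<^sup>L ?D2 f"
    by (rule integral_msum[OF sD iS])
  also have "integral\<^sup>L ?D1 f = integral\<^sup>L M (\<lambda>x. (1 - r x / c) *\<^sub>R f x)"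
    by (rule integral_density[OF fm hm h0])
  also have "\<dots> = integral\<^sup>L M (\<lambda>x. f x - (1/c) *\<^sub>R (r x *\<^sub>R f x))"
    by (rule Bochner_Integration.integral_cong) (auto simp: scaleR_diff_left)
  also have "\<dots> = integral\<^sup>L M f - integral\<^sup>L M (\<lambda>x. (1/c) *\<^sub>R (r x *\<^sub>R f x))"
    by (rule Bochner_Integration.integral_diff[OF iM integrable_scaleR_right[OF iLr]])
  also have "integral\<^sup>L M (\<lambda>x. (1/c) *\<^sub>R (r x *\<^sub>R f x)) = (1/c) *\<^sub>R integral\<^sup>L M (\<lambda>x. r x *\<^sub>R f x)"
    by (rule integral_scaleR_right)
  also have "integral\<^sup>L M (\<lambda>x. r x *\<^sub>R f x) = integral\<^sup>L L f"
    unfolding Ld by (rule integral_density[symmetric]) (use fm rm r0 in auto)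
  also have "integral\<^sup>L ?D2 f = integral\<^sup>L P (\<lambda>x. (1/c) *\<^sub>R f x)"
    by (rule integral_density[OF fmP]) (use c in auto)
  also have "\<dots> = (1/c) *\<^sub>R integral\<^sup>L P f" by (rule integral_scaleR_right)
  finally show ?thesis by simp
qed



lemma ennreal_add_fin: "(a::ennreal) \<noteq> \<infinity> \<Longrightarrow> b \<noteq> \<infinity> \<Longrightarrow> a + b \<noteq> \<infinity>"
  by (simp add: infinity_ennreal_def)

lemma fin_ne_inf: "finite_measure M \<Longrightarrow> emeasure M A \<noteq> \<infinity>"
  using finite_measure.emeasure_finite[of M A] by (simp add: infinity_ennreal_def)

lemma fin_lt_inf: "finite_measure M \<Longrightarrow> emeasure M A < \<infinity>"
  using finite_measure.emeasure_finite[of M A] by (simp add: infinity_ennreal_def less_top)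

lemma le_fin: "x \<le> (y::ennreal) \<Longrightarrow> y \<noteq> \<infinity> \<Longrightarrow> x \<noteq> \<infinity>"
  by (auto simp: infinity_ennreal_def top_unique)

theorem mainTheorem13:
  fixes \<phi> :: "'g::ab_group_add \<Rightarrow> quat"
    and \<mu> :: "('g \<Rightarrow> quat) measure"
  assumes phi: "\<phi> \<in> P_star_H"
    and mu_radon: "radon Gdelta_top \<mu>"
    and mu_repr: "\<forall>g. \<phi> g = (\<integral>\<gamma>. \<gamma> g \<partial>\<mu>)"
  shows "(\<forall>\<mu>'. radon Gdelta_top \<mu>' \<and> (\<forall>g. \<phi> g = (\<integral>\<gamma>. \<gamma> g \<partial>\<mu>')) \<longrightarrow> \<mu>' = \<mu>)
     \<longleftrightarrow>
     (\<forall>\<nu>\<in>K_Gdelta. (\<exists>A\<in>sets (borel_of Gdelta_top). \<nu> A \<noteq> 0) \<longrightarrow>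
        (\<forall>\<nu>1 \<nu>2. lebesgue_decomposition \<mu> (lower_variation (borel_of Gdelta_top) \<nu>) \<nu>1 \<nu>2 \<longrightarrow>
           (\<exists>A\<in>sets \<nu>2. emeasure \<nu>2 A \<noteq> 0) \<or>
           ((\<forall>A\<in>sets \<nu>2. emeasure \<nu>2 A = 0) \<and> \<not> ess_bounded \<mu> (RN_deriv \<mu> \<nu>1))))"
proof -
  let ?X = "Gdelta_top :: ('g \<Rightarrow> quat) topology"
  let ?B = "borel_of ?X"
  have smu: "sets \<mu> = sets ?B" and fmu: "finite_measure \<mu>" using mu_radon by (simp_all add: radon_def)
  interpret mu: finite_measure \<mu> by (rule fmu)
  have spmu: "space \<mu> = topspace ?X" using sets_eq_imp_space_eq[OF smu] by simp
  have cm: "\<And>K. compactin ?X K \<Longrightarrow> K \<in> sets ?B" by (rule compact_in_borel_Gdelta)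
  have spB: "space ?B \<in> sets ?B" by (rule sets.top)
  show ?thesis
  proof
    assume U: "\<forall>\<mu>'. radon ?X \<mu>' \<and> (\<forall>g. \<phi> g = (\<integral>\<gamma>. \<gamma> g \<partial>\<mu>')) \<longrightarrow> \<mu>' = \<mu>"
    show "\<forall>\<nu>\<in>K_Gdelta. (\<exists>A\<in>sets ?B. \<nu> A \<noteq> 0) \<longrightarrow>
        (\<forall>\<nu>1 \<nu>2. lebesgue_decomposition \<mu> (lower_variation ?B \<nu>) \<nu>1 \<nu>2 \<longrightarrow>
           (\<exists>A\<in>sets \<nu>2. emeasure \<nu>2 A \<noteq> 0) \<or>
           ((\<forall>A\<in>sets \<nu>2. emeasure \<nu>2 A = 0) \<and> \<not> ess_bounded \<mu> (RN_deriv \<mu> \<nu>1)))"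
    proof (intro ballI impI allI)
      fix \<nu> \<nu>1 \<nu>2
      assume \<nu>K: "\<nu> \<in> K_Gdelta" and ne: "\<exists>A\<in>sets ?B. \<nu> A \<noteq> 0"
        and dec: "lebesgue_decomposition \<mu> (lower_variation ?B \<nu>) \<nu>1 \<nu>2"
      let ?P = "upper_variation ?B \<nu>" and ?L = "lower_variation ?B \<nu>"
      have sr: "signed_radon ?X \<nu>" and Kint: "\<forall>g. (\<integral>\<gamma>. \<gamma> g \<partial>?P) - (\<integral>\<gamma>. \<gamma> g \<partial>?L) = 0"
        using \<nu>K unfolding K_Gdelta_def by blast+
      have s: "signed_measure ?B \<nu>" and rP: "radon ?X ?P" and rL: "radon ?X ?L"
        using sr unfolding signed_radon_def by blast+
      have sP: "sets ?P = sets ?B" by simp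
      have sL: "sets ?L = sets ?B" by (simp add: lower_is_upper)
      have fP: "finite_measure ?P" and fL: "finite_measure ?L" using rP rL by (simp_all add: radon_def)
      have s1: "sets \<nu>1 = sets ?L" and s2: "sets \<nu>2 = sets ?L"
        and add: "\<forall>A\<in>sets ?L. emeasure ?L A = emeasure \<nu>1 A + emeasure \<nu>2 A"
        and ac1: "absolutely_continuous \<mu> \<nu>1"
        using dec unfolding lebesgue_decomposition_def by blast+
      show "(\<exists>A\<in>sets \<nu>2. emeasure \<nu>2 A \<noteq> 0) \<or> ((\<forall>A\<in>sets \<nu>2. emeasure \<nu>2 A = 0) \<and> \<not> ess_bounded \<mu> (RN_deriv \<mu> \<nu>1))"
      proof (rule ccontr)
        assume "\<not> ((\<exists>A\<in>sets \<nu>2. emeasure \<nu>2 A \<noteq> 0) \<or> ((\<forall>A\<in>sets \<nu>2. emeasure \<nu>2 A = 0) \<and> \<not> ess_bounded \<mu> (RN_deriv \<mu> \<nu>1)))"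
        then have z: "\<forall>A\<in>sets \<nu>2. emeasure \<nu>2 A = 0" and eb: "ess_bounded \<mu> (RN_deriv \<mu> \<nu>1)" by blast+
        have eq1: "\<nu>1 = ?L"
        proof (rule measure_eqI)
          show "sets \<nu>1 = sets ?L" by (rule s1)
          fix A assume A: "A \<in> sets \<nu>1"
          then have "emeasure ?L A = emeasure \<nu>1 A + emeasure \<nu>2 A" using add s1 by blast
          moreover have "emeasure \<nu>2 A = 0" using z A s1 s2 by blast
          ultimately show "emeasure \<nu>1 A = emeasure ?L A" by simp
        qed
        have ac: "absolutely_continuous \<mu> ?L" using ac1 eq1 by simp
        have sLm: "sets ?L = sets \<mu>" using sL smu by simp
        define RN where "RN = RN_deriv \<mu> ?L"
        have RNm: "RN \<in> borel_measurable \<mu>" unfolding RN_def by (rule borel_measurable_RN_deriv)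
        have dens: "density \<mu> RN = ?L" unfolding RN_def by (rule mu.density_RN_deriv[OF ac sLm])
        obtain C where C: "AE x in \<mu>. RN x \<le> ennreal C"
          using eb eq1 unfolding ess_bounded_def RN_def by blast
        define c where "c = max C 1"
        have c0: "0 < c" and c1: "1 \<le> c" by (auto simp: c_def)
        have Cc: "AE x in \<mu>. RN x \<le> ennreal c"
          using C by eventually_elim (rule order_trans, assumption, rule ennreal_leI, simp add: c_def)
        define r where "r x = enn2real (RN x)" for x
        have rm: "r \<in> borel_measurable \<mu>" unfolding r_def using RNm by measurable
        have r0: "\<And>x. 0 \<le> r x" by (simp add: r_def)
        have RNr: "AE x in \<mu>. RN x = ennreal (r x)"
          using Cc
        proof eventually_elim
          case (elim x)
          then have "RN x < top" using ennreal_less_top le_less_trans by blast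
          then show ?case by (simp add: r_def)
        qed
        have rc: "AE x in \<mu>. r x \<le> c"
          using Cc
        proof eventually_elim
          case (elim x)
          then have "enn2real (RN x) \<le> enn2real (ennreal c)" by (intro enn2real_mono) auto
          then show ?case using c0 by (simp add: r_def)
        qed
        have Ld: "?L = density \<mu> (\<lambda>x. ennreal (r x))"
          unfolding dens[symmetric] by (rule density_cong[OF RNm _ RNr]) (use rm in measurable)
        define D1 where "D1 = density \<mu> (\<lambda>x. ennreal (1 - r x / c))"
        define D2 where "D2 = density ?P (\<lambda>_. ennreal (1/c))"
        define \<mu>' where "\<mu>' = msum D1 D2"
        have sD1: "sets D1 = sets ?B" unfolding D1_def using smu by simp
        have sD2: "sets D2 = sets ?B" unfolding D2_def by simp
        have sD21: "sets D2 = sets D1" using sD1 sD2 by simp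
        have s\<mu>': "sets \<mu>' = sets ?B" unfolding \<mu>'_def using sD1 by simp
        have hm: "(\<lambda>x. ennreal (1 - r x / c)) \<in> borel_measurable \<mu>" using rm by measurable
        have e1: "emeasure D1 E \<le> emeasure \<mu> E" if E: "E \<in> sets ?B" for E
        proof -
          have Em: "E \<in> sets \<mu>" using E smu by simp
          have "emeasure D1 E = (\<integral>\<^sup>+x. ennreal (1 - r x / c) * indicator E x \<partial>\<mu>)"
            unfolding D1_def by (rule emeasure_density[OF hm Em])
          also have "\<dots> \<le> (\<integral>\<^sup>+x. indicator E x \<partial>\<mu>)"
          proof (rule nn_integral_mono)
            fix x
            have "ennreal (1 - r x / c) \<le> 1" using r0[of x] c0 by (simp add: ennreal_le_1)
            then show "ennreal (1 - r x / c) * indicator E x \<le> indicator E x"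
              by (metis mult_1 mult_right_mono zero_le)
          qed
          also have "\<dots> = emeasure \<mu> E" using Em by simp
          finally show ?thesis .
        qed
        have e2: "emeasure D2 E \<le> emeasure ?P E" if E: "E \<in> sets ?B" for E
        proof -
          have Em: "E \<in> sets ?P" using E by simp
          have "emeasure D2 E = (\<integral>\<^sup>+x. ennreal (1/c) * indicator E x \<partial>?P)"
            unfolding D2_def by (rule emeasure_density[OF _ Em]) simp
          also have "\<dots> = ennreal (1/c) * emeasure ?P E" using Em by (rule nn_integral_cmult_indicator)
          also have "\<dots> \<le> 1 * emeasure ?P E"
            using c1 by (intro mult_right_mono) (auto simp: ennreal_le_1)
          finally show ?thesis by simp
        qed
        have e\<mu>': "emeasure \<mu>' E \<le> emeasure \<mu> E + emeasure ?P E" if E: "E \<in> sets ?B" for E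
        proof -
          have "emeasure \<mu>' E = emeasure D1 E + emeasure D2 E" unfolding \<mu>'_def by (rule emeasure_msum[OF sD21])
          also have "\<dots> \<le> emeasure \<mu> E + emeasure ?P E" using e1[OF E] e2[OF E] by (rule add_mono)
          finally show ?thesis .
        qed
        have sp\<mu>': "space \<mu>' = space ?B" using sets_eq_imp_space_eq[OF s\<mu>'] .
        have f\<mu>': "finite_measure \<mu>'"
        proof (rule finite_measureI)
          have "emeasure \<mu>' (space \<mu>') \<le> emeasure \<mu> (space ?B) + emeasure ?P (space ?B)"
            unfolding sp\<mu>' using spB by (rule e\<mu>')
          moreover have "emeasure \<mu> (space ?B) + emeasure ?P (space ?B) \<noteq> \<infinity>"
            by (intro ennreal_add_fin fin_ne_inf fmu fP)
          ultimately show "emeasure \<mu>' (space \<mu>') \<noteq> \<infinity>" by (rule le_fin)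
        qed
        have r\<mu>': "radon ?X \<mu>'"
          by (rule radon_dominated[OF mu_radon rP s\<mu>' f\<mu>' _ cm]) (use e\<mu>' s\<mu>' in auto)
        have sPm: "sets ?P = sets \<mu>" using smu by simp
        have fM': "finite_measure (msum (density \<mu> (\<lambda>x. ennreal (1 - r x / c))) (density ?P (\<lambda>_. ennreal (1/c))))"
          using f\<mu>' unfolding \<mu>'_def D1_def D2_def .
        have IM: "integral\<^sup>L \<mu>' f = integral\<^sup>L \<mu> f - (1/c) *\<^sub>R integral\<^sup>L ?L f + (1/c) *\<^sub>R integral\<^sup>L ?P f"
          if fm: "f \<in> borel_measurable \<mu>" and fb: "\<And>x. x \<in> space \<mu> \<Longrightarrow> norm (f x) \<le> 1"
          for f :: "('g \<Rightarrow> quat) \<Rightarrow> quat"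
          unfolding \<mu>'_def D1_def D2_def
          by (rule integral_mu'[OF sPm fmu fP fL Ld rm r0 rc c0 fm fb fM'])
        have IMr: "integral\<^sup>L \<mu>' f = integral\<^sup>L \<mu> f - (1/c) *\<^sub>R integral\<^sup>L ?L f + (1/c) *\<^sub>R integral\<^sup>L ?P f"
          if fm: "f \<in> borel_measurable \<mu>" and fb: "\<And>x. x \<in> space \<mu> \<Longrightarrow> norm (f x) \<le> 1"
          for f :: "('g \<Rightarrow> quat) \<Rightarrow> real"
          unfolding \<mu>'_def D1_def D2_def
          by (rule integral_mu'[OF sPm fmu fP fL Ld rm r0 rc c0 fm fb fM'])
        have rep: "\<forall>g. \<phi> g = (\<integral>\<gamma>. \<gamma> g \<partial>\<mu>')"
        proof
          fix g
          have fm: "(\<lambda>\<gamma>. \<gamma> g) \<in> borel_measurable \<mu>"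
            using eval_measurable[of g] smu by (simp cong: measurable_cong_sets)
          have fb: "\<And>x. x \<in> space \<mu> \<Longrightarrow> norm (x g) \<le> 1" using spmu norm_eval_le by blast
          have PL: "(\<integral>\<gamma>. \<gamma> g \<partial>?P) = (\<integral>\<gamma>. \<gamma> g \<partial>?L)" using Kint by simp
          have IMg: "(\<integral>\<gamma>. \<gamma> g \<partial>\<mu>') = (\<integral>\<gamma>. \<gamma> g \<partial>\<mu>) - (1/c) *\<^sub>R (\<integral>\<gamma>. \<gamma> g \<partial>?L) + (1/c) *\<^sub>R (\<integral>\<gamma>. \<gamma> g \<partial>?P)"
            by (rule IM[OF fm], erule fb)
          have "(\<integral>\<gamma>. \<gamma> g \<partial>\<mu>') = (\<integral>\<gamma>. \<gamma> g \<partial>\<mu>)" using IMg PL by simp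
          then show "\<phi> g = (\<integral>\<gamma>. \<gamma> g \<partial>\<mu>')" using mu_repr by simp
        qed
        have "\<mu>' = \<mu>" using U r\<mu>' rep by blast
        obtain A where A: "A \<in> sets ?B" "\<nu> A \<noteq> 0" using ne by blast
        have Am: "A \<in> sets \<mu>" using A smu by simp
        have fmA: "indicator A \<in> borel_measurable \<mu>" using Am by measurable
        have fbA: "\<And>x. x \<in> space \<mu> \<Longrightarrow> norm (indicator A x :: real) \<le> 1" by (simp add: indicator_def)
        have IMA: "integral\<^sup>L \<mu>' (indicator A) = integral\<^sup>L \<mu> (indicator A) - (1/c) *\<^sub>R integral\<^sup>L ?L (indicator A) + (1/c) *\<^sub>R integral\<^sup>L ?P (indicator A :: _ \<Rightarrow> real)"
          by (rule IMr[OF fmA], erule fbA)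
        have Asp: "A \<inter> space ?P = A" "A \<inter> space ?L = A"
          using sets.sets_into_space[OF A(1)] by (auto simp: lower_is_upper)
        have "(1/c) * measure ?P (A \<inter> space ?P) = (1/c) * measure ?L (A \<inter> space ?L)"
          using IMA \<open>\<mu>' = \<mu>\<close> by simp
        then have mPL: "measure ?P A = measure ?L A" using c0 Asp by simp
        have eP: "emeasure ?P A = pv ?B \<nu> A" by (rule emeasure_upper_variation[OF s A(1)])
        have eL: "emeasure ?L A = pv ?B (\<lambda>A. - \<nu> A) A"
          unfolding lower_is_upper by (rule emeasure_upper_variation[OF signed_measure_uminus[OF s] A(1)])
        have finP: "pv ?B \<nu> A < \<infinity>" using fin_lt_inf[OF fP, of A] eP by simp
        have finL: "pv ?B (\<lambda>A. - \<nu> A) A < \<infinity>" using fin_lt_inf[OF fL, of A] eL by simp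
        have "\<nu> A = enn2real (pv ?B \<nu> A) - enn2real (pv ?B (\<lambda>A. - \<nu> A) A)"
          by (rule jordan[OF s A(1) finP finL])
        also have "\<dots> = measure ?P A - measure ?L A" using eP eL by (simp add: measure_def)
        finally have "\<nu> A = 0" using mPL by simp
        then show False using A(2) by simp
      qed
    qed
  next
    assume R: "\<forall>\<nu>\<in>K_Gdelta. (\<exists>A\<in>sets ?B. \<nu> A \<noteq> 0) \<longrightarrow>
        (\<forall>\<nu>1 \<nu>2. lebesgue_decomposition \<mu> (lower_variation ?B \<nu>) \<nu>1 \<nu>2 \<longrightarrow>
           (\<exists>A\<in>sets \<nu>2. emeasure \<nu>2 A \<noteq> 0) \<or>
           ((\<forall>A\<in>sets \<nu>2. emeasure \<nu>2 A = 0) \<and> \<not> ess_bounded \<mu> (RN_deriv \<mu> \<nu>1)))"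
    show "\<forall>\<mu>'. radon ?X \<mu>' \<and> (\<forall>g. \<phi> g = (\<integral>\<gamma>. \<gamma> g \<partial>\<mu>')) \<longrightarrow> \<mu>' = \<mu>"
    proof (intro allI impI)
      fix \<mu>' assume H: "radon ?X \<mu>' \<and> (\<forall>g. \<phi> g = (\<integral>\<gamma>. \<gamma> g \<partial>\<mu>'))"
      then have r': "radon ?X \<mu>'" and rep': "\<forall>g. \<phi> g = (\<integral>\<gamma>. \<gamma> g \<partial>\<mu>')" by blast+
      have smu': "sets \<mu>' = sets ?B" and fmu': "finite_measure \<mu>'" using r' by (simp_all add: radon_def)
      interpret mu': finite_measure \<mu>' by (rule fmu')
      show "\<mu>' = \<mu>"
      proof (rule ccontr)
        assume neq: "\<mu>' \<noteq> \<mu>"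
        have "\<exists>A\<in>sets ?B. emeasure \<mu>' A \<noteq> emeasure \<mu> A"
        proof (rule ccontr)
          assume "\<not> (\<exists>A\<in>sets ?B. emeasure \<mu>' A \<noteq> emeasure \<mu> A)"
          then have "\<And>A. A \<in> sets \<mu>' \<Longrightarrow> emeasure \<mu>' A = emeasure \<mu> A" using smu' by blast
          then have "\<mu>' = \<mu>" using smu smu' by (intro measure_eqI) simp_all
          then show False using neq by simp
        qed
        then obtain A0 where A0: "A0 \<in> sets ?B" "emeasure \<mu>' A0 \<noteq> emeasure \<mu> A0" by blast
        define \<nu> where "\<nu> = (\<lambda>A. measure \<mu>' A - measure \<mu> A)"
        have s: "signed_measure ?B \<nu>"
          unfolding signed_measure_def
        proof (intro conjI allI impI)
          show "\<nu> {} = 0" by (simp add: \<nu>_def)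
          fix F :: "nat \<Rightarrow> ('g \<Rightarrow> quat) set" assume F: "range F \<subseteq> sets ?B" "disjoint_family F"
          have a: "(\<lambda>n. measure \<mu>' (F n)) sums measure \<mu>' (\<Union>n. F n)"
            using F smu' by (intro mu'.finite_measure_UNION) simp_all
          have b: "(\<lambda>n. measure \<mu> (F n)) sums measure \<mu> (\<Union>n. F n)"
            using F smu by (intro mu.finite_measure_UNION) simp_all
          show "(\<lambda>n. \<nu> (F n)) sums \<nu> (\<Union>n. F n)"
            unfolding \<nu>_def by (rule sums_diff[OF a b])
        qed
        let ?P = "upper_variation ?B \<nu>" and ?L = "lower_variation ?B \<nu>"
        have pvP: "pv ?B \<nu> E \<le> emeasure \<mu>' E" if E: "E \<in> sets ?B" for E
          unfolding pv_def
        proof (rule SUP_least)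
          fix B assume "B \<in> {B \<in> sets ?B. B \<subseteq> E}"
          then have B: "B \<in> sets ?B" "B \<subseteq> E" by auto
          have a: "measure \<mu>' B \<le> measure \<mu>' E" using mu'.finite_measure_mono[of B E] E B smu' by simp
          have b: "0 \<le> measure \<mu> B" by (rule measure_nonneg)
          have "\<nu> B \<le> measure \<mu>' E" unfolding \<nu>_def using a b by linarith
          then have "ennreal (\<nu> B) \<le> ennreal (measure \<mu>' E)" by (rule ennreal_leI)
          then show "ennreal (\<nu> B) \<le> emeasure \<mu>' E" by (simp add: mu'.emeasure_eq_measure)
        qed
        have pvL: "pv ?B (\<lambda>A. - \<nu> A) E \<le> emeasure \<mu> E" if E: "E \<in> sets ?B" for E
          unfolding pv_def
        proof (rule SUP_least)
          fix B assume "B \<in> {B \<in> sets ?B. B \<subseteq> E}"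
          then have B: "B \<in> sets ?B" "B \<subseteq> E" by auto
          have a: "measure \<mu> B \<le> measure \<mu> E" using mu.finite_measure_mono[of B E] E B smu by simp
          have b: "0 \<le> measure \<mu>' B" by (rule measure_nonneg)
          have "- \<nu> B \<le> measure \<mu> E" unfolding \<nu>_def using a b by linarith
          then have "ennreal (- \<nu> B) \<le> ennreal (measure \<mu> E)" by (rule ennreal_leI)
          then show "ennreal (- \<nu> B) \<le> emeasure \<mu> E" by (simp add: mu.emeasure_eq_measure)
        qed
        have eP: "emeasure ?P E = pv ?B \<nu> E" if "E \<in> sets ?B" for E
          by (rule emeasure_upper_variation[OF s that])
        have eL: "emeasure ?L E = pv ?B (\<lambda>A. - \<nu> A) E" if "E \<in> sets ?B" for E
          unfolding lower_is_upper by (rule emeasure_upper_variation[OF signed_measure_uminus[OF s] that])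
        have sP: "sets ?P = sets ?B" by simp
        have sL: "sets ?L = sets ?B" by (simp add: lower_is_upper)
        have spP: "space ?P = space ?B" by simp
        have spL: "space ?L = space ?B" by (simp add: lower_is_upper)
        have domP: "emeasure ?P E \<le> emeasure \<mu>' E" if "E \<in> sets ?B" for E
          using eP[OF that] pvP[OF that] by simp
        have domL: "emeasure ?L E \<le> emeasure \<mu> E" if "E \<in> sets ?B" for E
          using eL[OF that] pvL[OF that] by simp
        have fP: "finite_measure ?P"
        proof (rule finite_measureI)
          have "emeasure ?P (space ?P) \<le> emeasure \<mu>' (space ?B)" unfolding spP using spB by (rule domP)
          then show "emeasure ?P (space ?P) \<noteq> \<infinity>" by (rule le_fin) (rule fin_ne_inf[OF fmu'])
        qed
        have fL: "finite_measure ?L"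
        proof (rule finite_measureI)
          have "emeasure ?L (space ?L) \<le> emeasure \<mu> (space ?B)" unfolding spL using spB by (rule domL)
          then show "emeasure ?L (space ?L) \<noteq> \<infinity>" by (rule le_fin) (rule fin_ne_inf[OF fmu])
        qed
        have rP: "radon ?X ?P"
        proof (rule radon_dominated[OF r' r' sP fP _ cm])
          fix E assume "E \<in> sets ?P"
          then have "emeasure ?P E \<le> emeasure \<mu>' E" using domP by simp
          then show "emeasure ?P E \<le> emeasure \<mu>' E + emeasure \<mu>' E" by (rule add_increasing2[rotated]) simp
        qed
        have rL: "radon ?X ?L"
        proof (rule radon_dominated[OF mu_radon mu_radon sL fL _ cm])
          fix E assume "E \<in> sets ?L"
          then have "emeasure ?L E \<le> emeasure \<mu> E" using domL sL by simp
          then show "emeasure ?L E \<le> emeasure \<mu> E + emeasure \<mu> E" by (rule add_increasing2[rotated]) simp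
        qed
        have jor: "\<nu> E = measure ?P E - measure ?L E" if E: "E \<in> sets ?B" for E
        proof -
          have finP: "pv ?B \<nu> E < \<infinity>" using fin_lt_inf[OF fP, of E] eP[OF E] by simp
          have finL: "pv ?B (\<lambda>A. - \<nu> A) E < \<infinity>" using fin_lt_inf[OF fL, of E] eL[OF E] by simp
          have "\<nu> E = enn2real (pv ?B \<nu> E) - enn2real (pv ?B (\<lambda>A. - \<nu> A) E)"
            by (rule jordan[OF s E finP finL])
          also have "\<dots> = measure ?P E - measure ?L E" using eP[OF E] eL[OF E] by (simp add: measure_def)
          finally show ?thesis .
        qed
        have sPmu: "sets \<mu> = sets ?P" using smu by simp
        have sLmu': "sets \<mu>' = sets ?L" using smu' sL by simp
        have msum_eq: "msum ?P \<mu> = msum ?L \<mu>'"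
        proof (rule measure_eqI)
          show "sets (msum ?P \<mu>) = sets (msum ?L \<mu>')" using sP sL by simp
          fix E assume "E \<in> sets (msum ?P \<mu>)"
          then have E: "E \<in> sets ?B" by simp
          have "emeasure (msum ?P \<mu>) E = emeasure ?P E + emeasure \<mu> E" by (rule emeasure_msum[OF sPmu])
          also have "\<dots> = ennreal (measure ?P E) + ennreal (measure \<mu> E)"
            by (simp add: finite_measure.emeasure_eq_measure[OF fP] mu.emeasure_eq_measure)
          also have "\<dots> = ennreal (measure ?P E + measure \<mu> E)" by (simp add: ennreal_plus)
          also have "measure ?P E + measure \<mu> E = measure ?L E + measure \<mu>' E"
            using jor[OF E] by (simp add: \<nu>_def)
          also have "ennreal (measure ?L E + measure \<mu>' E) = ennreal (measure ?L E) + ennreal (measure \<mu>' E)"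
            by (simp add: ennreal_plus)
          also have "\<dots> = emeasure ?L E + emeasure \<mu>' E"
            by (simp add: finite_measure.emeasure_eq_measure[OF fL] mu'.emeasure_eq_measure)
          also have "\<dots> = emeasure (msum ?L \<mu>') E" by (rule emeasure_msum[OF sLmu', symmetric])
          finally show "emeasure (msum ?P \<mu>) E = emeasure (msum ?L \<mu>') E" .
        qed
        have fS: "finite_measure (msum ?P \<mu>)"
        proof (rule finite_measureI)
          have "emeasure (msum ?P \<mu>) (space (msum ?P \<mu>)) = emeasure ?P (space ?B) + emeasure \<mu> (space ?B)"
            by (simp add: emeasure_msum[OF sPmu])
          also have "\<dots> \<noteq> \<infinity>"
            by (intro ennreal_add_fin fin_ne_inf fmu fP)
          finally show "emeasure (msum ?P \<mu>) (space (msum ?P \<mu>)) \<noteq> \<infinity>" .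
        qed
        have Kint: "(\<integral>\<gamma>. \<gamma> g \<partial>?P) - (\<integral>\<gamma>. \<gamma> g \<partial>?L) = 0" for g
        proof -
          have i1: "integrable (msum ?P \<mu>) (\<lambda>\<gamma>. \<gamma> g)" by (rule eval_integrable) (simp_all add: fS)
          have i2: "integrable (msum ?L \<mu>') (\<lambda>\<gamma>. \<gamma> g)" using i1 msum_eq by simp
          have "(\<integral>\<gamma>. \<gamma> g \<partial>?P) + (\<integral>\<gamma>. \<gamma> g \<partial>\<mu>) = (\<integral>\<gamma>. \<gamma> g \<partial>msum ?P \<mu>)"
            by (rule integral_msum[OF sPmu i1, symmetric])
          also have "\<dots> = (\<integral>\<gamma>. \<gamma> g \<partial>msum ?L \<mu>')" by (simp only: msum_eq)
          also have "\<dots> = (\<integral>\<gamma>. \<gamma> g \<partial>?L) + (\<integral>\<gamma>. \<gamma> g \<partial>\<mu>')" by (rule integral_msum[OF sLmu' i2])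
          finally have "(\<integral>\<gamma>. \<gamma> g \<partial>?P) + (\<integral>\<gamma>. \<gamma> g \<partial>\<mu>) = (\<integral>\<gamma>. \<gamma> g \<partial>?L) + (\<integral>\<gamma>. \<gamma> g \<partial>\<mu>')" .
          moreover have "(\<integral>\<gamma>. \<gamma> g \<partial>\<mu>) = (\<integral>\<gamma>. \<gamma> g \<partial>\<mu>')" using mu_repr rep' by metis
          ultimately show ?thesis by simp
        qed
        have \<nu>K: "\<nu> \<in> K_Gdelta"
          unfolding K_Gdelta_def signed_radon_def using s rP rL Kint by blast
        have neA: "\<exists>A\<in>sets ?B. \<nu> A \<noteq> 0"
        proof (intro bexI[OF _ A0(1)] notI)
          assume "\<nu> A0 = 0"
          then have "measure \<mu>' A0 = measure \<mu> A0" by (simp add: \<nu>_def)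
          then have "emeasure \<mu>' A0 = emeasure \<mu> A0" by (simp add: mu.emeasure_eq_measure mu'.emeasure_eq_measure)
          then show False using A0(2) by simp
        qed
        have sLm: "sets ?L = sets \<mu>" using sL smu by simp
        have ac: "absolutely_continuous \<mu> ?L"
          unfolding absolutely_continuous_def
        proof
          fix E assume "E \<in> null_sets \<mu>"
          then have E: "E \<in> sets ?B" "emeasure \<mu> E = 0" using smu by auto
          have "emeasure ?L E \<le> 0" using domL[OF E(1)] E(2) by simp
          then show "E \<in> null_sets ?L" using E sL by auto
        qed
        have dec: "lebesgue_decomposition \<mu> ?L ?L (null_measure ?L)"
          unfolding lebesgue_decomposition_def mutually_singular_def
          using ac by (auto intro!: bexI[of _ "{}"])
        have "(\<exists>A\<in>sets (null_measure ?L). emeasure (null_measure ?L) A \<noteq> 0) \<or>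
           ((\<forall>A\<in>sets (null_measure ?L). emeasure (null_measure ?L) A = 0) \<and> \<not> ess_bounded \<mu> (RN_deriv \<mu> ?L))"
          using R \<nu>K neA dec by blast
        then have neb: "\<not> ess_bounded \<mu> (RN_deriv \<mu> ?L)" by simp
        have "AE x in \<mu>. RN_deriv \<mu> ?L x \<le> 1"
          by (rule RN_le_one[OF fmu sLm]) (use domL smu in simp)
        then have "ess_bounded \<mu> (RN_deriv \<mu> ?L)" unfolding ess_bounded_def
          by (intro exI[of _ 1]) simp
        then show False using neb by simp
      qed
    qed
  qed
qed


end
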